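(* Let $F$ be a recurrent set and let $X\subset F$ be a bifix code. Then $X$ is an $F$-thin and $F$-maximal bifix code if and only if its $F$-degree $d_F(X)$ is finite. In this case the set $I(X)$ of internal factors of $X$ satisfies $I(X)=\{w\in F\mid \delta_X(w)<d_F(X)\}$.
   Context: $A$ is a finite alphabet. A set $F\subset A^*$ is recurrent if it is nonempty, contains all factors of its elements, and for all $u,w\in F$ there is $v\in F$ with $uvw\in F$. A bifix code is a set $X\subset A^+$ such that no element is a proper prefix or a proper suffix of another element. For $X\subset F$, $X$ is an $F$-maximal bifix code if it is not properly contained in any bifix code $Y\subset F$, and $F$-thin if some word of $F$ is not a factor of a word of $X$. A parse of a word $w$ with respect to $X$ is a triple $(v,x,u)$ with $w=vxu$, $v\in A^*\setminus A^*X$ (no suffix of $v$ lies in $X$), $x\in X^*$, $u\in A^*\setminus XA^*$ (no prefix of $u$ lies in $X$); $\delta_X(w)$ is the number of parses of $w$. The $F$-degree is $d_F(X)=\max_{w\in F}\delta_X(w)$ (possibly infinite). $I(X)=\{w\in A^*\mid A^+wA^+\cap X\ne\emptyset\}$. *)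

theory Defs
  imports Main "HOL-Library.Extended_Nat"
begin

text \<open>Words over an alphabet of type 'a are lists; the alphabet A is a finite set of letters.
  A^* is lists A, A^+ is lists A minus the empty word.\<close>

definition factors_of :: "'a list set \<Rightarrow> 'a list set" where
  "factors_of S = {u. \<exists>w\<in>S. \<exists>p s. w = p @ u @ s}"

definition recurrent :: "'a set \<Rightarrow> 'a list set \<Rightarrow> bool" where
  "recurrent A F \<longleftrightarrow> F \<subseteq> lists A \<and> F \<noteq> {} \<and> factors_of F \<subseteq> F \<and>
     (\<forall>u\<in>F. \<forall>w\<in>F. \<exists>v\<in>F. u @ v @ w \<in> F)"

definition prefix_code :: "'a list set \<Rightarrow> bool" where
  "prefix_code X \<longleftrightarrow> (\<forall>x\<in>X. \<forall>y\<in>X. \<forall>z. y = x @ z \<longrightarrow> z = [])"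

definition suffix_code :: "'a list set \<Rightarrow> bool" where
  "suffix_code X \<longleftrightarrow> (\<forall>x\<in>X. \<forall>y\<in>X. \<forall>z. y = z @ x \<longrightarrow> z = [])"

definition bifix_code :: "'a set \<Rightarrow> 'a list set \<Rightarrow> bool" where
  "bifix_code A X \<longleftrightarrow> X \<subseteq> lists A - {[]} \<and> prefix_code X \<and> suffix_code X"

definition F_maximal_bifix :: "'a set \<Rightarrow> 'a list set \<Rightarrow> 'a list set \<Rightarrow> bool" where
  "F_maximal_bifix A F X \<longleftrightarrow> bifix_code A X \<and> X \<subseteq> F \<and>
     \<not> (\<exists>Y. bifix_code A Y \<and> Y \<subseteq> F \<and> X \<subset> Y)"

definition F_thin :: "'a list set \<Rightarrow> 'a list set \<Rightarrow> bool" where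
  "F_thin F X \<longleftrightarrow> (\<exists>w\<in>F. w \<notin> factors_of X)"

definition kstar :: "'a list set \<Rightarrow> 'a list set" where
  "kstar X = {concat xs | xs. set xs \<subseteq> X}"

definition parses :: "'a set \<Rightarrow> 'a list set \<Rightarrow> 'a list \<Rightarrow> ('a list \<times> 'a list \<times> 'a list) set" where
  "parses A X w = {(v, x, u). w = v @ x @ u
      \<and> v \<in> lists A \<and> \<not> (\<exists>p y. v = p @ y \<and> y \<in> X)
      \<and> x \<in> kstar X
      \<and> u \<in> lists A \<and> \<not> (\<exists>y s. u = y @ s \<and> y \<in> X)}"

definition delta :: "'a set \<Rightarrow> 'a list set \<Rightarrow> 'a list \<Rightarrow> nat" where
  "delta A X w = card (parses A X w)"

definition F_degree :: "'a set \<Rightarrow> 'a list set \<Rightarrow> 'a list set \<Rightarrow> enat" where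
  "F_degree A F X = (SUP w\<in>F. enat (delta A X w))"

definition internal_factors :: "'a set \<Rightarrow> 'a list set \<Rightarrow> 'a list set" where
  "internal_factors A X = {w \<in> lists A. \<exists>p s. p \<noteq> [] \<and> s \<noteq> [] \<and> p \<in> lists A \<and> s \<in> lists A \<and> p @ w @ s \<in> X}"

end

theory Submission
  imports Defs
begin


definition NS :: "'a list set \<Rightarrow> 'a list \<Rightarrow> bool" where
  "NS X q \<longleftrightarrow> \<not> (\<exists>p y. q = p @ y \<and> y \<in> X)"

definition NP :: "'a list set \<Rightarrow> 'a list \<Rightarrow> bool" where
  "NP X q \<longleftrightarrow> \<not> (\<exists>y s. q = y @ s \<and> y \<in> X)"

lemma parses_alt: "parses A X w = {(v, x, u). w = v @ x @ u \<and> v \<in> lists A \<and> NS X v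
      \<and> x \<in> kstar X \<and> u \<in> lists A \<and> NP X u}"
  by (simp add: parses_def NS_def NP_def)

lemma kstar_iff: "x \<in> kstar X \<longleftrightarrow> (\<exists>xs. x = concat xs \<and> set xs \<subseteq> X)"
  by (auto simp: kstar_def)

lemma kstar_Nil: "[] \<in> kstar X"
  unfolding kstar_iff by (rule exI[of _ "[]"]) simp

lemma kstar_Cons: "y \<in> X \<Longrightarrow> x \<in> kstar X \<Longrightarrow> y @ x \<in> kstar X"
  unfolding kstar_iff by (metis concat.simps(2) insert_subset list.simps(15))

lemma kstar_snoc: "y \<in> X \<Longrightarrow> x \<in> kstar X \<Longrightarrow> x @ y \<in> kstar X"
  unfolding kstar_iff
  by (metis concat.simps concat_append append.right_neutral set_append Un_subset_iff
      empty_subsetI insert_subset list.simps(15) set_empty)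

lemma suffix_cases: "a @ x = b @ y \<Longrightarrow> (\<exists>us. x = us @ y) \<or> (\<exists>us. y = us @ x)"
  by (auto simp: append_eq_append_conv2)

lemma prefix_cases: "x @ a = y @ b \<Longrightarrow> (\<exists>us. x = y @ us) \<or> (\<exists>us. y = x @ us)"
  by (auto simp: append_eq_append_conv2)

lemma uniq_left:
  assumes pc: "prefix_code X" and ne: "[] \<notin> X"
  shows "set xs \<subseteq> X \<Longrightarrow> set ys \<subseteq> X \<Longrightarrow> NP X u \<Longrightarrow> NP X u'
    \<Longrightarrow> concat xs @ u = concat ys @ u' \<Longrightarrow> concat xs = concat ys"
proof (induction xs arbitrary: ys)
  case Nil
  then show ?case by (cases ys) (auto simp: NP_def)
next
  case (Cons x xs)
  show ?case
  proof (cases ys)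
    case Nil then show ?thesis using Cons.prems by (auto simp: NP_def)
  next
    case (Cons y ys')
    have xX: "x \<in> X" and yX: "y \<in> X" using Cons.prems Cons by auto
    have eq: "x @ (concat xs @ u) = y @ (concat ys' @ u')"
      using Cons.prems(5) Cons by simp
    have "x = y"
    proof -
      from prefix_cases[OF eq] show ?thesis using pc xX yX unfolding prefix_code_def by auto
    qed
    with eq have "concat xs @ u = concat ys' @ u'" by simp
    then have "concat xs = concat ys'" using Cons.IH[of ys'] Cons.prems Cons by auto
    then show ?thesis using Cons \<open>x = y\<close> by simp
  qed
qed

lemma uniq_right:
  assumes sc: "suffix_code X" and ne: "[] \<notin> X"
  shows "set xs \<subseteq> X \<Longrightarrow> set ys \<subseteq> X \<Longrightarrow> NS X v \<Longrightarrow> NS X v'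
    \<Longrightarrow> v @ concat xs = v' @ concat ys \<Longrightarrow> concat xs = concat ys"
proof (induction xs arbitrary: ys rule: rev_induct)
  case Nil
  then show ?case by (cases ys rule: rev_exhaust) (auto simp: NS_def)
next
  case (snoc x xs)
  show ?case
  proof (cases ys rule: rev_exhaust)
    case Nil then show ?thesis using snoc.prems by (auto simp: NS_def)
  next
    case (snoc ys' y)
    have xX: "x \<in> X" and yX: "y \<in> X" using snoc.prems snoc by auto
    have eq: "(v @ concat xs) @ x = (v' @ concat ys') @ y"
      using snoc.prems(5) snoc by simp
    have "x = y"
    proof -
      from suffix_cases[OF eq] show ?thesis using sc xX yX unfolding suffix_code_def by auto
    qed
    with eq have "v @ concat xs = v' @ concat ys'" by simp
    then have "concat xs = concat ys'" using snoc.IH[of ys'] snoc.prems snoc by auto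
    then show ?thesis using snoc \<open>x = y\<close> by simp
  qed
qed

lemma exist_left:
  assumes ne: "[] \<notin> X"
  shows "\<exists>x u. x \<in> kstar X \<and> NP X u \<and> r = x @ u"
proof (induction r rule: length_induct)
  case (1 r)
  show ?case
  proof (cases "NP X r")
    case True then show ?thesis using kstar_Nil by fastforce
  next
    case False
    then obtain y s where r: "r = y @ s" and yX: "y \<in> X" by (auto simp: NP_def)
    with ne have "y \<noteq> []" by auto
    with r have "length s < length r" by simp
    with 1 obtain x u where "x \<in> kstar X" "NP X u" "s = x @ u" by blast
    then show ?thesis using r yX kstar_Cons by (metis append.assoc)
  qed
qed

lemma exist_right:
  assumes ne: "[] \<notin> X"
  shows "\<exists>v x. x \<in> kstar X \<and> NS X v \<and> r = v @ x"
proof (induction r rule: length_induct)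
  case (1 r)
  show ?case
  proof (cases "NS X r")
    case True then show ?thesis using kstar_Nil by fastforce
  next
    case False
    then obtain y s where r: "r = s @ y" and yX: "y \<in> X" by (auto simp: NS_def)
    with ne have "y \<noteq> []" by auto
    with r have "length s < length r" by simp
    with 1 obtain x v where "x \<in> kstar X" "NS X v" "s = v @ x" by blast
    then show ?thesis using r yX kstar_snoc by (metis append.assoc)
  qed
qed



lemma bif: "bifix_code A X \<Longrightarrow> prefix_code X \<and> suffix_code X \<and> [] \<notin> X \<and> X \<subseteq> lists A"
  by (auto simp: bifix_code_def)

lemma fin_pre: "finite {q. \<exists>r. t = q @ r}"
proof -
  have "{q. \<exists>r. t = q @ r} \<subseteq> (\<lambda>i. take i t) ` {..length t}"
  proof
    fix q assume "q \<in> {q. \<exists>r. t = q @ r}"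
    then obtain r where "t = q @ r" by blast
    then show "q \<in> (\<lambda>i. take i t) ` {..length t}" by (intro image_eqI[of _ _ "length q"]) auto
  qed
  then show ?thesis by (rule finite_subset) simp
qed

lemma card_pre: "card {q. \<exists>r. t = q @ r} \<le> length t + 1"
proof -
  have "{q. \<exists>r. t = q @ r} \<subseteq> (\<lambda>i. take i t) ` {..length t}"
  proof
    fix q assume "q \<in> {q. \<exists>r. t = q @ r}"
    then obtain r where "t = q @ r" by blast
    then show "q \<in> (\<lambda>i. take i t) ` {..length t}" by (intro image_eqI[of _ _ "length q"]) auto
  qed
  then have "card {q. \<exists>r. t = q @ r} \<le> card ((\<lambda>i. take i t) ` {..length t})"
    by (intro card_mono) auto
  also have "\<dots> \<le> card {..length t}" by (rule card_image_le) simp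
  finally show ?thesis by simp
qed

lemma fin_suf: "finite {u. \<exists>l. t = l @ u}"
proof -
  have "{u. \<exists>l. t = l @ u} \<subseteq> (\<lambda>i. drop i t) ` {..length t}"
  proof
    fix u assume "u \<in> {u. \<exists>l. t = l @ u}"
    then obtain l where "t = l @ u" by blast
    then show "u \<in> (\<lambda>i. drop i t) ` {..length t}" by (intro image_eqI[of _ _ "length l"]) auto
  qed
  then show ?thesis by (rule finite_subset) simp
qed

lemma card_suf: "card {u. \<exists>l. t = l @ u} \<le> length t + 1"
proof -
  have "{u. \<exists>l. t = l @ u} \<subseteq> (\<lambda>i. drop i t) ` {..length t}"
  proof
    fix u assume "u \<in> {u. \<exists>l. t = l @ u}"
    then obtain l where "t = l @ u" by blast
    then show "u \<in> (\<lambda>i. drop i t) ` {..length t}" by (intro image_eqI[of _ _ "length l"]) auto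
  qed
  then have "card {u. \<exists>l. t = l @ u} \<le> card ((\<lambda>i. drop i t) ` {..length t})"
    by (intro card_mono) auto
  also have "\<dots> \<le> card {..length t}" by (rule card_image_le) simp
  finally show ?thesis by simp
qed

lemma delta_pre:
  assumes b: "bifix_code A X" and t: "t \<in> lists A"
  shows "delta A X t = card {q. \<exists>r. t = q @ r \<and> NS X q}"
proof -
  have pc: "prefix_code X" and ne: "[] \<notin> X" using bif[OF b] by auto
  let ?f = "\<lambda>(v::'a list, x::'a list, u::'a list). v"
  have inj: "inj_on ?f (parses A X t)"
  proof (rule inj_onI)
    fix a b assume a: "a \<in> parses A X t" and bb: "b \<in> parses A X t" and e: "?f a = ?f b"
    obtain v x u where av: "a = (v, x, u)" by (cases a)
    obtain v' x' u' where bv: "b = (v', x', u')" by (cases b)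
    from a av have 1: "t = v @ x @ u" "x \<in> kstar X" "NP X u" by (auto simp: parses_alt)
    from bb bv have 2: "t = v' @ x' @ u'" "x' \<in> kstar X" "NP X u'" by (auto simp: parses_alt)
    from e av bv have vv: "v = v'" by simp
    with 1 2 have e2: "x @ u = x' @ u'" by simp
    from 1 obtain xs where xs: "x = concat xs" "set xs \<subseteq> X" by (auto simp: kstar_iff)
    from 2 obtain ys where ys: "x' = concat ys" "set ys \<subseteq> X" by (auto simp: kstar_iff)
    have "x = x'" using uniq_left[OF pc ne xs(2) ys(2) 1(3) 2(3)] e2 xs ys by simp
    with e2 vv av bv show "a = b" by simp
  qed
  have img: "?f ` parses A X t = {q. \<exists>r. t = q @ r \<and> NS X q}"
  proof
    show "?f ` parses A X t \<subseteq> {q. \<exists>r. t = q @ r \<and> NS X q}"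
      by (auto simp: parses_alt)
  next
    show "{q. \<exists>r. t = q @ r \<and> NS X q} \<subseteq> ?f ` parses A X t"
    proof
      fix q assume "q \<in> {q. \<exists>r. t = q @ r \<and> NS X q}"
      then obtain r where r: "t = q @ r" "NS X q" by auto
      obtain x u where xu: "x \<in> kstar X" "NP X u" "r = x @ u" using exist_left[OF ne] by blast
      have "(q, x, u) \<in> parses A X t" using r xu t by (auto simp: parses_alt)
      then show "q \<in> ?f ` parses A X t" by force
    qed
  qed
  show ?thesis unfolding delta_def using card_image[OF inj] img by simp
qed

lemma delta_suf:
  assumes b: "bifix_code A X" and t: "t \<in> lists A"
  shows "delta A X t = card {u. \<exists>l. t = l @ u \<and> NP X u}"
proof -
  have sc: "suffix_code X" and ne: "[] \<notin> X" using bif[OF b] by auto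
  let ?f = "\<lambda>(v::'a list, x::'a list, u::'a list). u"
  have inj: "inj_on ?f (parses A X t)"
  proof (rule inj_onI)
    fix a b assume a: "a \<in> parses A X t" and bb: "b \<in> parses A X t" and e: "?f a = ?f b"
    obtain v x u where av: "a = (v, x, u)" by (cases a)
    obtain v' x' u' where bv: "b = (v', x', u')" by (cases b)
    from a av have 1: "t = v @ x @ u" "x \<in> kstar X" "NS X v" by (auto simp: parses_alt)
    from bb bv have 2: "t = v' @ x' @ u'" "x' \<in> kstar X" "NS X v'" by (auto simp: parses_alt)
    from e av bv have uu: "u = u'" by simp
    with 1 2 have e2: "v @ x = v' @ x'" by simp
    from 1 obtain xs where xs: "x = concat xs" "set xs \<subseteq> X" by (auto simp: kstar_iff)
    from 2 obtain ys where ys: "x' = concat ys" "set ys \<subseteq> X" by (auto simp: kstar_iff)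
    have "x = x'" using uniq_right[OF sc ne xs(2) ys(2) 1(3) 2(3)] e2 xs ys by simp
    with e2 uu av bv show "a = b" by simp
  qed
  have img: "?f ` parses A X t = {u. \<exists>l. t = l @ u \<and> NP X u}"
  proof
    show "?f ` parses A X t \<subseteq> {u. \<exists>l. t = l @ u \<and> NP X u}"
      by (force simp: parses_alt)
  next
    show "{u. \<exists>l. t = l @ u \<and> NP X u} \<subseteq> ?f ` parses A X t"
    proof
      fix u assume "u \<in> {u. \<exists>l. t = l @ u \<and> NP X u}"
      then obtain l where r: "t = l @ u" "NP X u" by auto
      obtain v x where xu: "x \<in> kstar X" "NS X v" "l = v @ x" using exist_right[OF ne] by blast
      have "(v, x, u) \<in> parses A X t" using r xu t by (auto simp: parses_alt)
      then show "u \<in> ?f ` parses A X t" by force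
    qed
  qed
  show ?thesis unfolding delta_def using card_image[OF inj] img by simp
qed

lemma fin_preN: "finite {q. \<exists>r. t = q @ r \<and> NS X q}"
  by (rule finite_subset[OF _ fin_pre[of t]]) auto

lemma fin_sufN: "finite {u. \<exists>l. t = l @ u \<and> NP X u}"
  by (rule finite_subset[OF _ fin_suf[of t]]) auto

lemma delta_mono_r:
  assumes b: "bifix_code A X" and t: "t @ s \<in> lists A"
  shows "delta A X t \<le> delta A X (t @ s)"
proof -
  have "{q. \<exists>r. t = q @ r \<and> NS X q} \<subseteq> {q. \<exists>r. t @ s = q @ r \<and> NS X q}" by auto
  then have "card {q. \<exists>r. t = q @ r \<and> NS X q} \<le> card {q. \<exists>r. t @ s = q @ r \<and> NS X q}"
    by (rule card_mono[OF fin_preN])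
  then show ?thesis using delta_pre[OF b, of t] delta_pre[OF b, of "t @ s"] t by simp
qed

lemma delta_strict_r:
  assumes b: "bifix_code A X" and t: "t @ s \<in> lists A" and s: "s \<noteq> []" and ns: "NS X (t @ s)"
  shows "delta A X t < delta A X (t @ s)"
proof -
  have "{q. \<exists>r. t = q @ r \<and> NS X q} \<subset> {q. \<exists>r. t @ s = q @ r \<and> NS X q}"
  proof
    show "{q. \<exists>r. t = q @ r \<and> NS X q} \<subseteq> {q. \<exists>r. t @ s = q @ r \<and> NS X q}" by auto
    have "t @ s \<in> {q. \<exists>r. t @ s = q @ r \<and> NS X q}" using ns by auto
    moreover have "t @ s \<notin> {q. \<exists>r. t = q @ r \<and> NS X q}"
    proof
      assume "t @ s \<in> {q. \<exists>r. t = q @ r \<and> NS X q}"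
      then obtain r where "t = (t @ s) @ r" by auto
      then have "length t = length t + length s + length r" by (metis length_append)
      with s show False by simp
    qed
    ultimately show "{q. \<exists>r. t = q @ r \<and> NS X q} \<noteq> {q. \<exists>r. t @ s = q @ r \<and> NS X q}" by blast
  qed
  then have "card {q. \<exists>r. t = q @ r \<and> NS X q} < card {q. \<exists>r. t @ s = q @ r \<and> NS X q}"
    by (rule psubset_card_mono[OF fin_preN])
  then show ?thesis using delta_pre[OF b, of t] delta_pre[OF b, of "t @ s"] t by simp
qed

lemma delta_eq_r:
  assumes b: "bifix_code A X" and t: "t @ s \<in> lists A"
    and le: "delta A X (t @ s) \<le> delta A X t"
    and q: "t @ s = q @ r" and ns: "NS X q"
  shows "\<exists>r'. t = q @ r'"
proof -
  have sub: "{q. \<exists>r. t = q @ r \<and> NS X q} \<subseteq> {q. \<exists>r. t @ s = q @ r \<and> NS X q}" by auto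
  have "card {q. \<exists>r. t @ s = q @ r \<and> NS X q} \<le> card {q. \<exists>r. t = q @ r \<and> NS X q}"
    using le delta_pre[OF b, of t] delta_pre[OF b, of "t @ s"] t by simp
  then have "{q. \<exists>r. t = q @ r \<and> NS X q} = {q. \<exists>r. t @ s = q @ r \<and> NS X q}"
    using card_subset_eq[OF fin_preN sub] card_mono[OF fin_preN sub] by simp
  moreover have "q \<in> {q. \<exists>r. t @ s = q @ r \<and> NS X q}" using q ns by auto
  ultimately show ?thesis by auto
qed

lemma delta_mono_l:
  assumes b: "bifix_code A X" and t: "l @ t \<in> lists A"
  shows "delta A X t \<le> delta A X (l @ t)"
proof -
  have "{u. \<exists>l'. t = l' @ u \<and> NP X u} \<subseteq> {u. \<exists>l'. l @ t = l' @ u \<and> NP X u}" by force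
  then have "card {u. \<exists>l'. t = l' @ u \<and> NP X u} \<le> card {u. \<exists>l'. l @ t = l' @ u \<and> NP X u}"
    by (rule card_mono[OF fin_sufN])
  then show ?thesis using delta_suf[OF b, of t] delta_suf[OF b, of "l @ t"] t by simp
qed

lemma delta_factor:
  assumes b: "bifix_code A X" and t: "p @ w @ s \<in> lists A"
  shows "delta A X w \<le> delta A X (p @ w @ s)"
  using delta_mono_r[OF b, of w s] delta_mono_l[OF b, of p "w @ s"] t by simp

lemma delta_internal:
  assumes b: "bifix_code A X" and x: "p @ w @ s \<in> X" and p: "p \<noteq> []" and s: "s \<noteq> []"
  shows "delta A X w < delta A X (p @ w @ s)"
proof -
  have sc: "suffix_code X" and XA: "X \<subseteq> lists A" using bif[OF b] by auto
  have xl: "p @ w @ s \<in> lists A" using x XA by auto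
  have "NS X (w @ s)"
  proof (unfold NS_def, rule notI, elim exE conjE)
    fix q y assume e: "w @ s = q @ y" and y: "y \<in> X"
    have "p @ w @ s = (p @ q) @ y" using e by simp
    with sc x y have "p @ q = []" unfolding suffix_code_def by blast
    with p show False by simp
  qed
  then have "delta A X w < delta A X (w @ s)" using delta_strict_r[OF b, of w s] xl s by simp
  also have "\<dots> \<le> delta A X (p @ (w @ s))" using delta_mono_l[OF b] xl by simp
  finally show ?thesis by simp
qed



lemma rec_sub: "recurrent A F \<Longrightarrow> F \<subseteq> lists A" by (simp add: recurrent_def)
lemma rec_ne: "recurrent A F \<Longrightarrow> F \<noteq> {}" by (simp add: recurrent_def)
lemma rec_fac: "recurrent A F \<Longrightarrow> p @ u @ s \<in> F \<Longrightarrow> u \<in> F"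
  unfolding recurrent_def factors_of_def by blast
lemma rec_rec: "recurrent A F \<Longrightarrow> u \<in> F \<Longrightarrow> w \<in> F \<Longrightarrow> \<exists>v\<in>F. u @ v @ w \<in> F"
  unfolding recurrent_def by blast


lemma bounded_degree:
  assumes "\<forall>t\<in>F. delta A X t \<le> k"
  shows "F_degree A F X < \<infinity>"
proof -
  have "F_degree A F X \<le> enat k" unfolding F_degree_def
    by (rule SUP_least) (use assms in auto)
  moreover have "enat k < \<infinity>" by simp
  ultimately show ?thesis by (rule le_less_trans)
qed

lemma enat_fin: "(d::enat) < \<infinity> \<Longrightarrow> \<exists>k. d = enat k"
  by (cases d) auto

lemma degree_max:
  assumes ne: "F \<noteq> {}" and fin: "F_degree A F X < \<infinity>"
  shows "\<exists>z\<in>F. (\<forall>t\<in>F. delta A X t \<le> delta A X z) \<and> F_degree A F X = enat (delta A X z)"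
proof -
  obtain k where k: "F_degree A F X = enat k" using enat_fin[OF fin] by blast
  have bd: "\<forall>t\<in>F. delta A X t \<le> k"
  proof
    fix t assume "t \<in> F"
    then have "enat (delta A X t) \<le> F_degree A F X" unfolding F_degree_def by (rule SUP_upper)
    with k show "delta A X t \<le> k" by simp
  qed
  have "delta A X ` F \<subseteq> {..k}" using bd by auto
  then have finS: "finite (delta A X ` F)" by (rule finite_subset) simp
  have "delta A X ` F \<noteq> {}" using ne by simp
  with finS have "Max (delta A X ` F) \<in> delta A X ` F" by (rule Max_in)
  then obtain z where z: "z \<in> F" "delta A X z = Max (delta A X ` F)" by (auto simp del: Max_in)
  have mx: "\<forall>t\<in>F. delta A X t \<le> delta A X z"
  proof
    fix t assume "t \<in> F"
    then have "delta A X t \<in> delta A X ` F" by blast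
    with finS have "delta A X t \<le> Max (delta A X ` F)" by (rule Max_ge)
    with z show "delta A X t \<le> delta A X z" by simp
  qed
  have "F_degree A F X \<le> enat (delta A X z)" unfolding F_degree_def
    by (rule SUP_least) (use mx in auto)
  moreover have "enat (delta A X z) \<le> F_degree A F X" unfolding F_degree_def
    using z(1) by (rule SUP_upper)
  ultimately have "F_degree A F X = enat (delta A X z)" by (rule antisym)
  with z(1) mx show ?thesis by blast
qed
lemma factor_trans: "w \<in> factors_of {y} \<Longrightarrow> y \<in> factors_of X \<Longrightarrow> w \<in> factors_of X"
proof -
  assume "w \<in> factors_of {y}" "y \<in> factors_of X"
  then obtain p s p' s' x where "y = p @ w @ s" "x \<in> X" "x = p' @ y @ s'"
    unfolding factors_of_def by blast
  then have "x = (p' @ p) @ w @ (s @ s')" by simp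
  with \<open>x \<in> X\<close> show ?thesis unfolding factors_of_def by blast
qed

lemma maxfact:
  assumes m: "F_maximal_bifix A F X" and FA: "F \<subseteq> lists A" and yF: "y \<in> F" and yne: "y \<noteq> []"
    and nf: "y \<notin> factors_of X" and ns: "NS X y"
  shows "\<not> NP X y"
proof
  assume np: "NP X y"
  have b: "bifix_code A X" and XF: "X \<subseteq> F" and nm: "\<not> (\<exists>Y. bifix_code A Y \<and> Y \<subseteq> F \<and> X \<subset> Y)"
    using m by (auto simp: F_maximal_bifix_def)
  have pc: "prefix_code X" and sc: "suffix_code X" and XA: "X \<subseteq> lists A - {[]}"
    using b by (auto simp: bifix_code_def)
  have yX: "y \<notin> X" using ns unfolding NS_def by (metis append.left_neutral)
  have nfb: "\<And>b p s. b \<in> X \<Longrightarrow> b = p @ y @ s \<Longrightarrow> False"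
    using nf unfolding factors_of_def by blast
  have "bifix_code A (insert y X)"
    unfolding bifix_code_def
  proof (intro conjI)
    show "insert y X \<subseteq> lists A - {[]}" using XA yF FA yne by auto
    show "prefix_code (insert y X)" unfolding prefix_code_def
    proof (intro ballI allI impI)
      fix a c z assume a: "a \<in> insert y X" and c: "c \<in> insert y X" and e: "c = a @ z"
      show "z = []"
      proof (cases "a = y")
        case True
        show ?thesis
        proof (cases "c = y")
          case True with \<open>a = y\<close> e show ?thesis by simp
        next
          case False with c have "c \<in> X" by simp
          with e \<open>a = y\<close> nfb[of c "[]" z] show ?thesis by simp
        qed
      next
        case False with a have aX: "a \<in> X" by simp
        show ?thesis
        proof (cases "c = y")
          case True with e aX np show ?thesis unfolding NP_def by blast
        next
          case False with c have "c \<in> X" by simp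
          with aX e pc show ?thesis unfolding prefix_code_def by blast
        qed
      qed
    qed
    show "suffix_code (insert y X)" unfolding suffix_code_def
    proof (intro ballI allI impI)
      fix a c z assume a: "a \<in> insert y X" and c: "c \<in> insert y X" and e: "c = z @ a"
      show "z = []"
      proof (cases "a = y")
        case True
        show ?thesis
        proof (cases "c = y")
          case True with \<open>a = y\<close> e show ?thesis by simp
        next
          case False with c have "c \<in> X" by simp
          with e \<open>a = y\<close> nfb[of c z "[]"] show ?thesis by simp
        qed
      next
        case False with a have aX: "a \<in> X" by simp
        show ?thesis
        proof (cases "c = y")
          case True with e aX ns show ?thesis unfolding NS_def by blast
        next
          case False with c have "c \<in> X" by simp
          with aX e sc show ?thesis unfolding suffix_code_def by blast
        qed
      qed
    qed
  qed
  moreover have "insert y X \<subseteq> F" using XF yF by auto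
  moreover have "X \<subset> insert y X" using yX by auto
  ultimately show False using nm by blast
qed



lemma fac_single: "y = p @ w @ s \<Longrightarrow> w \<in> factors_of {y}"
  unfolding factors_of_def by blast

lemma fac_X: "x \<in> X \<Longrightarrow> x = p @ w @ s \<Longrightarrow> w \<in> factors_of X"
  unfolding factors_of_def by blast

lemma partA:
  assumes r: "recurrent A F" and b: "bifix_code A X" and thin: "F_thin F X"
    and m: "F_maximal_bifix A F X"
  shows "\<exists>k. \<forall>t\<in>F. delta A X t \<le> k"
proof -
  have FA: "F \<subseteq> lists A" using rec_sub[OF r] .
  obtain w0 where w0: "w0 \<in> F" "w0 \<notin> factors_of X" using thin unfolding F_thin_def by blast
  show ?thesis
  proof (cases "\<exists>w\<in>F. w \<notin> factors_of X \<and> NS X w")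
    case True
    then obtain w where w: "w \<in> F" "w \<notin> factors_of X" "NS X w" by blast
    show ?thesis
    proof (intro exI[of _ "length w + 1"] ballI)
      fix t assume t: "t \<in> F"
      obtain s where s: "s \<in> F" "t @ s @ w \<in> F" using rec_rec[OF r t w(1)] by blast
      let ?t' = "t @ s @ w"
      have tl: "?t' \<in> lists A" using s FA by auto
      have "delta A X t \<le> delta A X (t @ (s @ w))" using delta_mono_r[OF b, of t "s @ w"] tl by simp
      also have "\<dots> = card {u. \<exists>l. ?t' = l @ u \<and> NP X u}" by (rule delta_suf[OF b tl])
      also have "\<dots> \<le> card {u. \<exists>l. w = l @ u}"
      proof (rule card_mono[OF fin_suf], rule subsetI)
        fix y assume "y \<in> {u. \<exists>l. ?t' = l @ u \<and> NP X u}"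
        then obtain l where e: "?t' = l @ y" and np: "NP X y" by blast
        have e': "l @ y = (t @ s) @ w" using e by simp
        from suffix_cases[OF e'] consider (a) "\<exists>us. y = us @ w" | (b) "\<exists>us. w = us @ y" by blast
        then show "y \<in> {u. \<exists>l. w = l @ u}"
        proof cases
          case b then show ?thesis by auto
        next
          case a then obtain us where y: "y = us @ w" by blast
          show ?thesis
          proof (cases "us = []")
            case True with y show ?thesis by auto
          next
            case False
            have yF: "y \<in> F" using rec_fac[OF r, of l y "[]"] e s(2) by simp
            have yne: "y \<noteq> []" using False y by simp
            have nf: "y \<notin> factors_of X"
            proof
              assume "y \<in> factors_of X"
              moreover have "w \<in> factors_of {y}" using fac_single[of y us w "[]"] y by simp
              ultimately have "w \<in> factors_of X" using factor_trans by blast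
              with w(2) show False by simp
            qed
            have nsy: "NS X y"
            proof (unfold NS_def, rule notI, elim exE conjE)
              fix p x assume px: "y = p @ x" and xX: "x \<in> X"
              then have "p @ x = us @ w" using y by simp
              from suffix_cases[OF this] consider "\<exists>v. x = v @ w" | "\<exists>v. w = v @ x" by blast
              then show False
              proof cases
                case 1 then obtain v where "x = v @ w" by blast
                then have "w \<in> factors_of X" using fac_X[OF xX, of v w "[]"] by simp
                with w(2) show False by simp
              next
                case 2 then obtain v where "w = v @ x" by blast
                with w(3) xX show False unfolding NS_def by blast
              qed
            qed
            from maxfact[OF m FA yF yne nf nsy] np show ?thesis by simp
          qed
        qed
      qed
      also have "\<dots> \<le> length w + 1" by (rule card_suf)
      finally show "delta A X t \<le> length w + 1" by simp
    qed
  next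
    case False
    then have hyp: "\<And>w. w \<in> F \<Longrightarrow> w \<notin> factors_of X \<Longrightarrow> \<not> NS X w" by blast
    show ?thesis
    proof (intro exI[of _ "length w0 + 1"] ballI)
      fix t assume t: "t \<in> F"
      obtain s where s: "s \<in> F" "w0 @ s @ t \<in> F" using rec_rec[OF r w0(1) t] by blast
      let ?t' = "w0 @ s @ t"
      have tl: "?t' \<in> lists A" using s FA by auto
      have "delta A X t \<le> delta A X ((w0 @ s) @ t)" using delta_mono_l[OF b, of "w0 @ s" t] tl by simp
      also have "\<dots> = card {q. \<exists>r. ?t' = q @ r \<and> NS X q}" using delta_pre[OF b tl] by simp
      also have "\<dots> \<le> card {q. \<exists>r. w0 = q @ r}"
      proof (rule card_mono[OF fin_pre], rule subsetI)
        fix q assume "q \<in> {q. \<exists>r. ?t' = q @ r \<and> NS X q}"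
        then obtain r where e: "?t' = q @ r" and ns: "NS X q" by blast
        have e': "q @ r = w0 @ (s @ t)" using e by simp
        from prefix_cases[OF e'] consider (a) "\<exists>us. q = w0 @ us" | (b) "\<exists>us. w0 = q @ us" by blast
        then show "q \<in> {q. \<exists>r. w0 = q @ r}"
        proof cases
          case b then show ?thesis by auto
        next
          case a then obtain us where q: "q = w0 @ us" by blast
          have qF: "q \<in> F" using rec_fac[OF r, of "[]" q r] e s(2) by simp
          have nf: "q \<notin> factors_of X"
          proof
            assume "q \<in> factors_of X"
            moreover have "w0 \<in> factors_of {q}" using fac_single[of q "[]" w0 us] q by simp
            ultimately have "w0 \<in> factors_of X" using factor_trans by blast
            with w0(2) show False by simp
          qed
          from hyp[OF qF nf] ns show ?thesis by simp
        qed
      qed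
      also have "\<dots> \<le> length w0 + 1" by (rule card_pre)
      finally show "delta A X t \<le> length w0 + 1" by simp
    qed
  qed
qed



lemma partB_max:
  assumes r: "recurrent A F" and b: "bifix_code A X" and XF: "X \<subseteq> F"
    and z: "z \<in> F" and mx: "\<forall>t\<in>F. delta A X t \<le> delta A X z"
  shows "F_maximal_bifix A F X"
  unfolding F_maximal_bifix_def
proof (intro conjI b XF notI)
  assume "\<exists>Y. bifix_code A Y \<and> Y \<subseteq> F \<and> X \<subset> Y"
  then obtain Y where bY: "bifix_code A Y" and YF: "Y \<subseteq> F" and XY: "X \<subset> Y" by blast
  then obtain y where y: "y \<in> Y" "y \<notin> X" by blast
  have yF: "y \<in> F" using y YF by auto
  have yne: "y \<noteq> []" using bY y unfolding bifix_code_def by auto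
  have scY: "suffix_code Y" using bY unfolding bifix_code_def by auto
  obtain s where s: "s \<in> F" "z @ s @ y \<in> F" using rec_rec[OF r z yF] by blast
  let ?t = "z @ s @ y"
  have tl: "z @ (s @ y) \<in> lists A" using s rec_sub[OF r] by auto
  have le: "delta A X (z @ (s @ y)) \<le> delta A X z" using mx s by simp
  have "\<not> NS X ?t"
  proof
    assume ns: "NS X ?t"
    have "\<exists>r'. z = ?t @ r'" using delta_eq_r[OF b tl le, of ?t "[]"] ns by simp
    then obtain r' where "z = ?t @ r'" by blast
    then have "length z = length z + length s + length y + length r'" by (metis length_append add.assoc)
    with yne show False by simp
  qed
  then obtain p x where px: "?t = p @ x" "x \<in> X" unfolding NS_def by blast
  have xY: "x \<in> Y" using px XY by auto
  have "p @ x = (z @ s) @ y" using px by simp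
  from suffix_cases[OF this] consider "\<exists>us. x = us @ y" | "\<exists>us. y = us @ x" by blast
  then show False
  proof cases
    case 1 then obtain us where "x = us @ y" by blast
    with scY xY y have "us = []" unfolding suffix_code_def by blast
    with \<open>x = us @ y\<close> px y show False by simp
  next
    case 2 then obtain us where "y = us @ x" by blast
    with scY xY y have "us = []" unfolding suffix_code_def by blast
    with \<open>y = us @ x\<close> px y show False by simp
  qed
qed

lemma partB_thin:
  assumes r: "recurrent A F" and b: "bifix_code A X" and XF: "X \<subseteq> F"
    and z: "z \<in> F" and mx: "\<forall>t\<in>F. delta A X t \<le> delta A X z"
  shows "F_thin F X"
proof (cases "F \<subseteq> {[]}")
  case True
  with rec_ne[OF r] have "[] \<in> F" by auto
  have "X = {}" using True XF b unfolding bifix_code_def by auto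
  then have "[] \<notin> factors_of X" unfolding factors_of_def by simp
  with \<open>[] \<in> F\<close> show ?thesis unfolding F_thin_def by blast
next
  case False
  then obtain t where t: "t \<in> F" "t \<noteq> []" by auto
  then obtain a t' where at: "t = a # t'" by (cases t) auto
  have aF: "[a] \<in> F" using rec_fac[OF r, of "[]" "[a]" t'] t at by simp
  obtain v1 where v1: "[a] @ v1 @ z \<in> F" using rec_rec[OF r aF z] by blast
  obtain v2 where v2: "([a] @ v1 @ z) @ v2 @ [a] \<in> F" using rec_rec[OF r v1 aF] by blast
  let ?m = "v1 @ z @ v2"
  have w'F: "[a] @ ?m @ [a] \<in> F" using v2 by simp
  have mF: "?m \<in> F" using rec_fac[OF r w'F] .
  have ml: "v1 @ z @ v2 \<in> lists A" using mF rec_sub[OF r] by auto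
  have "delta A X z \<le> delta A X ?m" using delta_factor[OF b ml] .
  moreover have "delta A X ?m \<le> delta A X z" using mx mF by blast
  ultimately have dm: "delta A X ?m = delta A X z" by simp
  have "[a] @ ?m @ [a] \<notin> factors_of X"
  proof
    assume "[a] @ ?m @ [a] \<in> factors_of X"
    then obtain x p s where x: "x \<in> X" "x = p @ ([a] @ ?m @ [a]) @ s"
      unfolding factors_of_def by blast
    then have "x = (p @ [a]) @ ?m @ ([a] @ s)" by simp
    then have "delta A X ?m < delta A X x" using delta_internal[OF b, of "p @ [a]" ?m "[a] @ s"] x
      by simp
    moreover have "delta A X x \<le> delta A X z" using mx x XF by blast
    ultimately show False using dm by simp
  qed
  with w'F show ?thesis unfolding F_thin_def by blast
qed

lemma partC:
  assumes r: "recurrent A F" and b: "bifix_code A X" and XF: "X \<subseteq> F"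
    and z: "z \<in> F" and mx: "\<forall>t\<in>F. delta A X t \<le> delta A X z"
  shows "internal_factors A X = {w \<in> F. delta A X w < delta A X z}"
proof
  have FA: "F \<subseteq> lists A" using rec_sub[OF r] .
  show "internal_factors A X \<subseteq> {w \<in> F. delta A X w < delta A X z}"
  proof
    fix w assume "w \<in> internal_factors A X"
    then obtain p s where ps: "p \<noteq> []" "s \<noteq> []" "p @ w @ s \<in> X"
      unfolding internal_factors_def by blast
    have xF: "p @ w @ s \<in> F" using ps XF by auto
    have "w \<in> F" using rec_fac[OF r xF] .
    moreover have "delta A X w < delta A X (p @ w @ s)" using delta_internal[OF b ps(3) ps(1) ps(2)] .
    moreover have "delta A X (p @ w @ s) \<le> delta A X z" using mx xF by blast
    ultimately show "w \<in> {w \<in> F. delta A X w < delta A X z}" by simp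
  qed
next
  have FA: "F \<subseteq> lists A" using rec_sub[OF r] .
  have XA: "X \<subseteq> lists A" using b unfolding bifix_code_def by auto
  show "{w \<in> F. delta A X w < delta A X z} \<subseteq> internal_factors A X"
  proof
    fix w assume "w \<in> {w \<in> F. delta A X w < delta A X z}"
    then have wF: "w \<in> F" and lt: "delta A X w < delta A X z" by auto
    have wl: "w \<in> lists A" using wF FA by auto
    show "w \<in> internal_factors A X"
    proof (rule ccontr)
      assume "w \<notin> internal_factors A X"
      then have ni: "\<And>p s. p \<noteq> [] \<Longrightarrow> s \<noteq> [] \<Longrightarrow> p \<in> lists A \<Longrightarrow> s \<in> lists A \<Longrightarrow> p @ w @ s \<notin> X"
        using wl unfolding internal_factors_def by blast
      obtain s1 where s1: "z @ s1 @ w \<in> F" using rec_rec[OF r z wF] by blast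
      obtain s2 where s2: "(z @ s1 @ w) @ s2 @ z \<in> F" using rec_rec[OF r s1 z] by blast
      define L where "L = z @ s1"
      define R where "R = s2 @ z"
      have tF: "L @ (w @ R) \<in> F" using s2 unfolding L_def R_def by simp
      have tl: "L @ (w @ R) \<in> lists A" using tF FA by auto
      have LF: "L \<in> F" using rec_fac[OF r, of "[]" L "w @ R"] tF by simp
      have RF: "R \<in> F" using rec_fac[OF r, of "L @ w" R "[]"] tF by simp
      have wRF: "w @ R \<in> F" using rec_fac[OF r, of L "w @ R" "[]"] tF by simp
      have Ll: "z @ s1 \<in> lists A" using LF FA unfolding L_def by blast
      have "delta A X z \<le> delta A X L" unfolding L_def by (rule delta_mono_r[OF b Ll])
      moreover have "delta A X L \<le> delta A X z" using mx LF by blast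
      ultimately have dL: "delta A X L = delta A X z" by (rule antisym[rotated])
      have wRl: "w @ R \<in> lists A" using wRF FA by blast
      have Rl: "s2 @ z \<in> lists A" using RF FA unfolding R_def by blast
      have "delta A X z \<le> delta A X R" unfolding R_def by (rule delta_mono_l[OF b Rl])
      moreover have "delta A X R \<le> delta A X (w @ R)" by (rule delta_mono_l[OF b wRl])
      ultimately have dwR: "delta A X z \<le> delta A X (w @ R)" by (rule order_trans)
      have "delta A X (L @ (w @ R)) \<le> delta A X z" using mx tF by blast
      then have le: "delta A X (L @ (w @ R)) \<le> delta A X L" using dL by simp
      have key: "\<And>q r. L @ (w @ R) = q @ r \<Longrightarrow> NS X q \<Longrightarrow> \<exists>r'. L = q @ r'"
        using delta_eq_r[OF b tl le] by blast
      have sub: "{q. \<exists>r. w @ R = q @ r \<and> NS X q} \<subseteq> {q. \<exists>r. w = q @ r \<and> NS X q}"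
      proof
        fix q assume "q \<in> {q. \<exists>r. w @ R = q @ r \<and> NS X q}"
        then obtain r0 where e: "w @ R = q @ r0" and ns: "NS X q" by blast
        from prefix_cases[OF e[symmetric]] consider "\<exists>us. q = w @ us" | "\<exists>us. w = q @ us" by blast
        then show "q \<in> {q. \<exists>r. w = q @ r \<and> NS X q}"
        proof cases
          case 2 with ns show ?thesis by blast
        next
          case 1 then obtain us where q: "q = w @ us" by blast
          show ?thesis
          proof (cases "us = []")
            case True with q ns show ?thesis by auto
          next
            case False
            have "\<not> NS X (L @ q)"
            proof
              assume "NS X (L @ q)"
              moreover have "L @ (w @ R) = (L @ q) @ r0" using e by simp
              ultimately obtain r' where "L = (L @ q) @ r'" using key by blast
              then have "length L = length ((L @ q) @ r')" by (rule arg_cong)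
              with q False show False by simp
            qed
            then obtain p' y where py: "L @ q = p' @ y" "y \<in> X" unfolding NS_def by blast
            from suffix_cases[OF py(1)[symmetric]] consider "\<exists>u'. y = u' @ q" | "\<exists>u'. q = u' @ y" by blast
            then show ?thesis
            proof cases
              case 2 with ns py(2) have False unfolding NS_def by blast
              then show ?thesis ..
            next
              case 1 then obtain u' where y: "y = u' @ q" by blast
              show ?thesis
              proof (cases "u' = []")
                case True with y have "q = [] @ y" by simp
                with ns py(2) have False unfolding NS_def by blast
                then show ?thesis ..
              next
                case u'ne: False
                have yl: "u' @ w @ us \<in> lists A" using y q py(2) XA by auto
                have "u' @ w @ us \<in> X" using y q py(2) by simp
                with ni[OF u'ne False] yl have False by simp
                then show ?thesis ..
              qed
            qed
          qed
        qed
      qed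
      have c1: "card {q. \<exists>r. w @ R = q @ r \<and> NS X q} \<le> card {q. \<exists>r. w = q @ r \<and> NS X q}"
        by (rule card_mono[OF fin_preN sub])
      have "delta A X (w @ R) \<le> delta A X w"
        using c1 delta_pre[OF b wRl] delta_pre[OF b wl] by simp
      with dwR lt show False by simp
    qed
  qed
qed



theorem mainTheorem2:
  fixes A :: "'a set" and F X :: "'a list set"
  assumes "finite A"
    and "recurrent A F"
    and "bifix_code A X"
    and "X \<subseteq> F"
  shows "((F_thin F X \<and> F_maximal_bifix A F X) \<longleftrightarrow> F_degree A F X < \<infinity>) \<and>
         (F_degree A F X < \<infinity> \<longrightarrow>
           internal_factors A X = {w \<in> F. enat (delta A X w) < F_degree A F X})"
proof (rule conjI)
  show "(F_thin F X \<and> F_maximal_bifix A F X) \<longleftrightarrow> F_degree A F X < \<infinity>"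
  proof
  assume "F_thin F X \<and> F_maximal_bifix A F X"
  then obtain k where "\<forall>t\<in>F. delta A X t \<le> k" using partA[OF assms(2,3)] by blast
  then show "F_degree A F X < \<infinity>" by (rule bounded_degree)
next
  assume fin: "F_degree A F X < \<infinity>"
  obtain z where z: "z \<in> F" "\<forall>t\<in>F. delta A X t \<le> delta A X z"
    "F_degree A F X = enat (delta A X z)" using degree_max[OF rec_ne[OF assms(2)] fin] by blast
  show "F_thin F X \<and> F_maximal_bifix A F X"
    using partB_thin[OF assms(2,3,4) z(1,2)] partB_max[OF assms(2,3,4) z(1,2)] by blast
  qed
next
  show "F_degree A F X < \<infinity> \<longrightarrow>
           internal_factors A X = {w \<in> F. enat (delta A X w) < F_degree A F X}"
  proof
  assume fin: "F_degree A F X < \<infinity>"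
  obtain z where z: "z \<in> F" "\<forall>t\<in>F. delta A X t \<le> delta A X z"
    "F_degree A F X = enat (delta A X z)" using degree_max[OF rec_ne[OF assms(2)] fin] by blast
  show "internal_factors A X = {w \<in> F. enat (delta A X w) < F_degree A F X}"
    using partC[OF assms(2,3,4) z(1,2)] z(3) by simp
  qed
qed


end
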